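(* CGTDS$^F$ reduces (via a computable many-one reduction) to CGTDS.
   Context: An instance of CGTDS consists of a rational discount factor $0<\lambda<1$, a rational target $t$, rational weights $a_1,\dots,a_k$, and an $\omega$-regular expression $e$ over $\{a_1,\dots,a_k\}$; it asks whether there is an infinite $w\in\{a_1,\dots,a_k\}^\omega$ in the language of $e$ with $\sum_{i=0}^\infty w(i)\lambda^i=t$. An instance of CGTDS$^F$ has the same data except that $e$ is a regular expression, and it asks whether there is a finite $w=w(0)\cdots w(n-1)\in\{a_1,\dots,a_k\}^*$ in the language of $e$ with $\sum_{i=0}^{n-1} w(i)\lambda^i=t$. *)

theory Defs
  imports Complex_Main "HOL-Library.Nat_Bijection" "HOL-Library.Omega_Words_Fun"
begin

datatype 'a rexp = Zero | One | Atom 'a | Plus "'a rexp" "'a rexp"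
  | Times "'a rexp" "'a rexp" | Star "'a rexp"

fun lang :: "'a rexp \<Rightarrow> 'a list set" where
  "lang Zero = {}"
| "lang One = {[]}"
| "lang (Atom a) = {[a]}"
| "lang (Plus r s) = lang r \<union> lang s"
| "lang (Times r s) = {u @ v | u v. u \<in> lang r \<and> v \<in> lang s}"
| "lang (Star r) = {concat us | us. \<forall>u\<in>set us. u \<in> lang r}"

fun atoms :: "'a rexp \<Rightarrow> 'a set" where
  "atoms Zero = {}"
| "atoms One = {}"
| "atoms (Atom a) = {a}"
| "atoms (Plus r s) = atoms r \<union> atoms s"
| "atoms (Times r s) = atoms r \<union> atoms s"
| "atoms (Star r) = atoms r"

datatype 'a orexp = Omega "'a rexp" | OTimes "'a rexp" "'a orexp" | OPlus "'a orexp" "'a orexp"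

text \<open>r^omega: infinite concatenations of nonempty words of L(r)\<close>
definition omega_lang :: "'a list set \<Rightarrow> 'a word set" where
  "omega_lang L = {w. \<exists>p::nat \<Rightarrow> nat. p 0 = 0 \<and> strict_mono p \<and>
      (\<forall>i. map w [p i..<p (Suc i)] \<in> L)}"

fun olang :: "'a orexp \<Rightarrow> 'a word set" where
  "olang (Omega r) = omega_lang (lang r)"
| "olang (OTimes r e) = {u \<frown> v | u v. u \<in> lang r \<and> v \<in> olang e}"
| "olang (OPlus e f) = olang e \<union> olang f"

fun oatoms :: "'a orexp \<Rightarrow> 'a set" where
  "oatoms (Omega r) = atoms r"
| "oatoms (OTimes r e) = atoms r \<union> oatoms e"
| "oatoms (OPlus e f) = oatoms e \<union> oatoms f"

text \<open>Instances: (lambda, t, [a_1,...,a_k], e)\<close>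
type_synonym inst_F = "rat \<times> rat \<times> rat list \<times> rat rexp"
type_synonym inst = "rat \<times> rat \<times> rat list \<times> rat orexp"

definition valid_F :: "inst_F \<Rightarrow> bool" where
  "valid_F I = (case I of (lam, t, ks, e) \<Rightarrow> 0 < lam \<and> lam < 1 \<and> atoms e \<subseteq> set ks)"

definition valid :: "inst \<Rightarrow> bool" where
  "valid I = (case I of (lam, t, ks, e) \<Rightarrow> 0 < lam \<and> lam < 1 \<and> oatoms e \<subseteq> set ks)"

definition CGTDS_F :: "inst_F \<Rightarrow> bool" where
  "CGTDS_F I = (case I of (lam, t, ks, e) \<Rightarrow>
     (\<exists>w. set w \<subseteq> set ks \<and> w \<in> lang e \<and> (\<Sum>i<length w. w ! i * lam ^ i) = t))"

definition CGTDS :: "inst \<Rightarrow> bool" where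
  "CGTDS I = (case I of (lam, t, ks, e) \<Rightarrow>
     (\<exists>w. range w \<subseteq> set ks \<and> w \<in> olang e \<and>
        (\<lambda>i. real_of_rat (w i) * real_of_rat lam ^ i) sums real_of_rat t))"

datatype recf = RZ | RS | RProj nat | RComp recf "recf list" | RPrec recf recf | RMn recf

inductive reval :: "recf \<Rightarrow> nat list \<Rightarrow> nat \<Rightarrow> bool" where
  "reval RZ xs 0"
| "reval RS (x # xs) (Suc x)"
| "i < length xs \<Longrightarrow> reval (RProj i) xs (xs ! i)"
| "list_all2 (\<lambda>g y. reval g xs y) gs ys \<Longrightarrow> reval f ys z \<Longrightarrow> reval (RComp f gs) xs z"
| "reval f xs y \<Longrightarrow> reval (RPrec f g) (0 # xs) y"
| "reval (RPrec f g) (n # xs) y \<Longrightarrow> reval g (n # y # xs) z \<Longrightarrow> reval (RPrec f g) (Suc n # xs) z"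
| "reval f (n # xs) 0 \<Longrightarrow> (\<forall>m<n. \<exists>y. y \<noteq> 0 \<and> reval f (m # xs) y) \<Longrightarrow> reval (RMn f) xs n"

definition enc_rat :: "rat \<Rightarrow> nat" where
  "enc_rat q = prod_encode (int_encode (fst (quotient_of q)), nat (snd (quotient_of q)))"

fun enc_rexp :: "rat rexp \<Rightarrow> nat" where
  "enc_rexp Zero = prod_encode (0, 0)"
| "enc_rexp One = prod_encode (1, 0)"
| "enc_rexp (Atom a) = prod_encode (2, enc_rat a)"
| "enc_rexp (Plus r s) = prod_encode (3, prod_encode (enc_rexp r, enc_rexp s))"
| "enc_rexp (Times r s) = prod_encode (4, prod_encode (enc_rexp r, enc_rexp s))"
| "enc_rexp (Star r) = prod_encode (5, enc_rexp r)"

fun enc_orexp :: "rat orexp \<Rightarrow> nat" where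
  "enc_orexp (Omega r) = prod_encode (0, enc_rexp r)"
| "enc_orexp (OTimes r e) = prod_encode (1, prod_encode (enc_rexp r, enc_orexp e))"
| "enc_orexp (OPlus e f) = prod_encode (2, prod_encode (enc_orexp e, enc_orexp f))"

definition enc_inst_F :: "inst_F \<Rightarrow> nat" where
  "enc_inst_F I = (case I of (lam, t, ks, e) \<Rightarrow>
     list_encode [enc_rat lam, enc_rat t, list_encode (map enc_rat ks), enc_rexp e])"

definition enc_inst :: "inst \<Rightarrow> nat" where
  "enc_inst I = (case I of (lam, t, ks, e) \<Rightarrow>
     list_encode [enc_rat lam, enc_rat t, list_encode (map enc_rat ks), enc_orexp e])"

definition computable_red :: "(inst_F \<Rightarrow> inst) \<Rightarrow> bool" where
  "computable_red f = (\<exists>p. \<forall>I. reval p [enc_inst_F I] (enc_inst (f I)))"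

end

theory Submission
  imports Defs
begin

lemmas rv = reval.intros

lemma rcomp1: "reval g xs y \<Longrightarrow> reval f [y] z \<Longrightarrow> reval (RComp f [g]) xs z"
  by (rule rv(4)[where ys="[y]"]) auto

lemma rcomp2: "reval g1 xs y1 \<Longrightarrow> reval g2 xs y2 \<Longrightarrow> reval f [y1, y2] z
  \<Longrightarrow> reval (RComp f [g1, g2]) xs z"
  by (rule rv(4)[where ys="[y1, y2]"]) auto

lemma rproj0: "reval (RProj 0) (x # xs) x"
  using rv(3)[of 0 "x # xs"] by simp

lemma rproj1: "reval (RProj 1) (x # y # xs) y"
  using rv(3)[of 1 "x # y # xs"] by simp

lemma rproj2: "reval (RProj 2) (x # y # z # xs) z"
  using rv(3)[of 2 "x # y # z # xs"] by simp

fun r_const :: "nat \<Rightarrow> recf" where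
  "r_const 0 = RZ"
| "r_const (Suc k) = RComp RS [r_const k]"

lemma r_const: "reval (r_const k) xs k"
proof (induction k)
  case 0 show ?case by (simp add: rv(1))
next
  case (Suc k) then show ?case by (simp add: rcomp1[OF Suc rv(2)])
qed

definition "r_add = RPrec (RProj 0) (RComp RS [RProj 1])"

lemma r_add: "reval r_add (n # x # xs) (n + x)"
proof (induction n)
  case 0 show ?case unfolding r_add_def using rv(5)[OF rproj0] by simp
next
  case (Suc n)
  have "reval (RComp RS [RProj 1]) (n # (n + x) # x # xs) (Suc (n + x))"
    by (rule rcomp1[OF rproj1]) (rule rv(2))
  then show ?case using rv(6)[OF Suc[unfolded r_add_def]] unfolding r_add_def by simp
qed

definition "r_pred = RPrec RZ (RProj 0)"

lemma r_pred: "reval r_pred (n # xs) (n - 1)"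
proof (induction n)
  case 0 show ?case unfolding r_pred_def using rv(5)[OF rv(1)] by simp
next
  case (Suc m)
  show ?case using rv(6)[OF Suc[unfolded r_pred_def] rproj0] unfolding r_pred_def by simp
qed

definition "r_sub = RPrec (RProj 0) (RComp r_pred [RProj 1])"

lemma r_sub: "reval r_sub (n # x # xs) (x - n)"
proof (induction n)
  case 0 show ?case unfolding r_sub_def using rv(5)[OF rproj0] by simp
next
  case (Suc n)
  have "reval (RComp r_pred [RProj 1]) (n # (x - n) # x # xs) (x - Suc n)"
    by (rule rcomp1[OF rproj1]) (rule r_pred[of "x - n" "[]", unfolded diff_diff_left, simplified])
  then show ?case using rv(6)[OF Suc[unfolded r_sub_def]] unfolding r_sub_def by simp
qed

definition "r_tri = RPrec RZ (RComp r_add [RProj 1, RComp RS [RProj 0]])"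

lemma r_tri: "reval r_tri (k # xs) (triangle k)"
proof (induction k)
  case 0 show ?case unfolding r_tri_def using rv(5)[OF rv(1)] by simp
next
  case (Suc k)
  have "reval (RComp r_add [RProj 1, RComp RS [RProj 0]]) (k # triangle k # xs) (triangle k + Suc k)"
    by (rule rcomp2[OF rproj1 rcomp1[OF rproj0 rv(2)]]) (rule r_add)
  then show ?case using rv(6)[OF Suc[unfolded r_tri_def]] unfolding r_tri_def by simp
qed

definition "r_pair = RComp r_add [RComp r_tri [RComp r_add [RProj 0, RProj 1]], RProj 0]"

lemma r_pair: "reval r_pair [a, b] (prod_encode (a, b))"
  unfolding r_pair_def prod_encode_def split
  by (rule rcomp2[OF rcomp1[OF rcomp2[OF rproj0 rproj1 r_add] r_tri] rproj0 r_add])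

definition "r_cons = RComp RS [r_pair]"

lemma r_cons: "reval r_cons [x, list_encode xs] (list_encode (x # xs))"
  unfolding r_cons_def using rcomp1[OF r_pair rv(2)] by simp

definition "r_h = RComp r_sub [RComp r_tri [RComp RS [RProj 0]], RComp RS [RProj 1]]"

lemma r_h: "reval r_h [k, n] (Suc n - triangle (Suc k))"
  unfolding r_h_def
  by (rule rcomp2[OF rcomp1[OF rcomp1[OF rproj0 rv(2)] r_tri] rcomp1[OF rproj1 rv(2)]]) (rule r_sub)

lemma tri_mono: "m \<le> n \<Longrightarrow> triangle m \<le> triangle n"
  by (induction n rule: dec_induct) auto

definition "r_K = RMn r_h"

lemma r_K: "reval r_K [prod_encode (a, b)] (a + b)"
  unfolding r_K_def
proof (rule rv(7))
  show "reval r_h [a + b, prod_encode (a, b)] 0"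
    using r_h[of "a+b" "prod_encode (a, b)"] by (simp add: prod_encode_def)
  show "\<forall>m<a + b. \<exists>y. y \<noteq> 0 \<and> reval r_h [m, prod_encode (a, b)] y"
  proof (intro allI impI)
    fix m assume "m < a + b"
    then have "triangle (Suc m) \<le> triangle (a + b)"
      using tri_mono[of "Suc m" "a + b"] by simp
    then have "Suc (prod_encode (a, b)) - triangle (Suc m) \<noteq> 0"
      by (simp add: prod_encode_def)
    then show "\<exists>y. y \<noteq> 0 \<and> reval r_h [m, prod_encode (a, b)] y"
      using r_h[of m "prod_encode (a, b)"] by blast
  qed
qed

definition "r_fst = RComp r_sub [RComp r_tri [r_K], RProj 0]"
definition "r_snd = RComp r_sub [r_fst, r_K]"

lemma r_fst_pe: "reval r_fst [prod_encode (a, b)] a"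
proof -
  have "reval r_sub [triangle (a + b), prod_encode (a, b)] a"
    using r_sub[of "triangle (a + b)" "prod_encode (a, b)" "[]"] by (simp add: prod_encode_def)
  then show ?thesis unfolding r_fst_def
    by (rule rcomp2[OF rcomp1[OF r_K r_tri] rproj0])
qed

lemma r_snd_pe: "reval r_snd [prod_encode (a, b)] b"
proof -
  have "reval r_sub [a, a + b] b"
    using r_sub[of a "a + b" "[]"] by simp
  then show ?thesis unfolding r_snd_def
    by (rule rcomp2[OF r_fst_pe r_K])
qed

definition "r_hd = RComp r_fst [RComp r_pred [RProj 0]]"
definition "r_tl = RComp r_snd [RComp r_pred [RProj 0]]"

lemma r_pred_le: "reval (RComp r_pred [RProj 0]) [list_encode (x # xs)] (prod_encode (x, list_encode xs))"
proof -
  have "reval r_pred [list_encode (x # xs)] (list_encode (x # xs) - 1)" by (rule r_pred)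
  then have "reval r_pred [list_encode (x # xs)] (prod_encode (x, list_encode xs))" by simp
  then show ?thesis by (rule rcomp1[OF rproj0])
qed

lemma r_hd: "reval r_hd [list_encode (x # xs)] x"
  unfolding r_hd_def by (rule rcomp1[OF r_pred_le r_fst_pe])

lemma r_tl: "reval r_tl [list_encode (x # xs)] (list_encode xs)"
  unfolding r_tl_def by (rule rcomp1[OF r_pred_le r_snd_pe])

lemma r_const_nil: "reval (r_const 0) xs (list_encode [])"
  using r_const[of 0 xs] by simp

definition red :: "inst_F \<Rightarrow> inst" where
  "red I = (case I of (lam, t, ks, e) \<Rightarrow> (lam, t, 0 # ks, OTimes e (Omega (Atom 0))))"

definition "T1 = RComp r_tl [RProj 0]"
definition "T2 = RComp r_tl [T1]"
definition "T3 = RComp r_tl [T2]"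

definition "r_prog = RComp r_cons [RComp r_hd [RProj 0], RComp r_cons [RComp r_hd [T1],
   RComp r_cons [RComp r_cons [r_const (enc_rat 0), RComp r_hd [T2]],
   RComp r_cons [RComp r_pair [r_const 1, RComp r_pair [RComp r_hd [T3],
       RComp r_pair [r_const 0, r_const (enc_rexp (Atom 0))]]], r_const 0]]]]"

lemma computable_red: "computable_red red"
  unfolding computable_red_def
proof (intro exI allI)
  fix I :: inst_F
  obtain lam t ks e where I: "I = (lam, t, ks, e)" by (cases I) auto
  define a where "a = enc_rat lam"
  define b where "b = enc_rat t"
  define c where "c = list_encode (map enc_rat ks)"
  define d where "d = enc_rexp e"
  define n where "n = list_encode [a, b, c, d]"
  have inp: "enc_inst_F I = n" by (simp add: I enc_inst_F_def n_def a_def b_def c_def d_def)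
  have out: "enc_inst (red I) = list_encode [a, b, list_encode (enc_rat 0 # map enc_rat ks),
     prod_encode (1, prod_encode (d, prod_encode (0, enc_rexp (Atom 0))))]"
    by (simp add: I red_def enc_inst_def a_def b_def c_def d_def)
  have t1: "reval T1 [n] (list_encode [b, c, d])"
    unfolding T1_def n_def by (rule rcomp1[OF rproj0 r_tl])
  have t2: "reval T2 [n] (list_encode [c, d])"
    unfolding T2_def by (rule rcomp1[OF t1 r_tl])
  have t3: "reval T3 [n] (list_encode [d])"
    unfolding T3_def by (rule rcomp1[OF t2 r_tl])
  have xa: "reval (RComp r_hd [RProj 0]) [n] a"
    unfolding n_def by (rule rcomp1[OF rproj0 r_hd])
  have xb: "reval (RComp r_hd [T1]) [n] b" by (rule rcomp1[OF t1 r_hd])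
  have xc: "reval (RComp r_hd [T2]) [n] c" by (rule rcomp1[OF t2 r_hd])
  have xd: "reval (RComp r_hd [T3]) [n] d" by (rule rcomp1[OF t3 r_hd])
  have c': "reval (RComp r_cons [r_const (enc_rat 0), RComp r_hd [T2]]) [n]
      (list_encode (enc_rat 0 # map enc_rat ks))"
    unfolding c_def by (rule rcomp2[OF r_const xc[unfolded c_def] r_cons])
  have d': "reval (RComp r_pair [r_const 1, RComp r_pair [RComp r_hd [T3],
       RComp r_pair [r_const 0, r_const (enc_rexp (Atom 0))]]]) [n]
      (prod_encode (1, prod_encode (d, prod_encode (0, enc_rexp (Atom 0)))))"
    by (rule rcomp2[OF r_const rcomp2[OF xd rcomp2[OF r_const r_const r_pair] r_pair] r_pair])
  have "reval r_prog [n] (list_encode [a, b, list_encode (enc_rat 0 # map enc_rat ks),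
     prod_encode (1, prod_encode (d, prod_encode (0, enc_rexp (Atom 0))))])"
    unfolding r_prog_def
    by (rule rcomp2[OF xa rcomp2[OF xb rcomp2[OF c' rcomp2[OF d' r_const_nil r_cons] r_cons] r_cons] r_cons])
  then show "reval r_prog [enc_inst_F I] (enc_inst (red I))" using inp out by simp
qed

lemma lang_atoms: "w \<in> lang r \<Longrightarrow> set w \<subseteq> atoms r"
  by (induction r arbitrary: w) fastforce+

lemma omega_zero: "v \<in> omega_lang {[0::rat]} \<longleftrightarrow> v = (\<lambda>_. 0)"
proof
  assume "v \<in> omega_lang {[0::rat]}"
  then obtain p :: "nat \<Rightarrow> nat" where p0: "p 0 = 0" and pm: "\<And>i. map v [p i..<p (Suc i)] = [0]"
    unfolding omega_lang_def by auto
  have step: "p (Suc i) = Suc (p i) \<and> v (p i) = 0" for i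
  proof -
    have "length (map v [p i..<p (Suc i)]) = 1" using pm[of i] by simp
    then have "p (Suc i) = Suc (p i)" by simp
    then show ?thesis using pm[of i] by simp
  qed
  have "p i = i" for i by (induction i) (auto simp: p0 step)
  then show "v = (\<lambda>_. 0)" using step by (metis)
next
  assume "v = (\<lambda>_. 0)"
  then show "v \<in> omega_lang {[0::rat]}"
    unfolding omega_lang_def by (intro CollectI exI[of _ id]) (auto simp: strict_mono_def)
qed

lemma conc_sums:
  "(\<lambda>i. real_of_rat ((u \<frown> (\<lambda>_. 0)) i) * real_of_rat lam ^ i) sums
     real_of_rat (\<Sum>i<length u. u ! i * lam ^ i)"
proof -
  have "(\<lambda>i. real_of_rat ((u \<frown> (\<lambda>_. 0)) i) * real_of_rat lam ^ i) sums
     (\<Sum>i\<in>{..<length u}. real_of_rat ((u \<frown> (\<lambda>_. 0)) i) * real_of_rat lam ^ i)"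
    by (rule sums_finite) auto
  also have "(\<Sum>i\<in>{..<length u}. real_of_rat ((u \<frown> (\<lambda>_. 0)) i) * real_of_rat lam ^ i)
      = real_of_rat (\<Sum>i<length u. u ! i * lam ^ i)"
    by (simp add: of_rat_sum of_rat_mult of_rat_power)
  finally show ?thesis .
qed

lemma red_correct:
  assumes "valid_F I"
  shows "valid (red I) \<and> (CGTDS_F I \<longleftrightarrow> CGTDS (red I))"
proof -
  obtain lam t ks e where I: "I = (lam, t, ks, e)" by (cases I) auto
  have at: "atoms e \<subseteq> set ks" and lam: "0 < lam" "lam < 1"
    using assms by (auto simp: valid_F_def I)
  have v: "valid (red I)" using at lam by (auto simp: valid_def red_def I)
  have "CGTDS_F I \<longleftrightarrow> CGTDS (red I)"
  proof
    assume "CGTDS_F I"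
    then obtain w where w: "set w \<subseteq> set ks" "w \<in> lang e" "(\<Sum>i<length w. w ! i * lam ^ i) = t"
      by (auto simp: CGTDS_F_def I)
    define W where "W = w \<frown> (\<lambda>_. (0::rat))"
    have "range W \<subseteq> set (0 # ks)"
    proof
      fix x assume "x \<in> range W"
      then obtain i where "x = W i" by auto
      then show "x \<in> set (0 # ks)" using w(1)
        by (cases "i < length w") (auto simp: W_def dest: nth_mem)
    qed
    moreover have "W \<in> olang (OTimes e (Omega (Atom 0)))"
      using w(2) omega_zero by (auto simp: W_def)
    moreover have "(\<lambda>i. real_of_rat (W i) * real_of_rat lam ^ i) sums real_of_rat t"
      using conc_sums[of w lam] w(3) by (simp add: W_def)
    ultimately show "CGTDS (red I)" by (auto simp: CGTDS_def red_def I)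
  next
    assume "CGTDS (red I)"
    then obtain W where W: "W \<in> olang (OTimes e (Omega (Atom 0)))"
      "(\<lambda>i. real_of_rat (W i) * real_of_rat lam ^ i) sums real_of_rat t"
      by (auto simp: CGTDS_def red_def I)
    then obtain u v where uv: "W = u \<frown> v" "u \<in> lang e" "v \<in> omega_lang {[0]}" by auto
    have "v = (\<lambda>_. 0)" using uv(3) omega_zero by blast
    then have "(\<lambda>i. real_of_rat (W i) * real_of_rat lam ^ i) sums
       real_of_rat (\<Sum>i<length u. u ! i * lam ^ i)"
      using conc_sums[of u lam] uv(1) by simp
    then have "real_of_rat t = real_of_rat (\<Sum>i<length u. u ! i * lam ^ i)"
      using sums_unique2[OF W(2)] by blast
    then have "(\<Sum>i<length u. u ! i * lam ^ i) = t" by simp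
    moreover have "set u \<subseteq> set ks" using lang_atoms[OF uv(2)] at by blast
    ultimately show "CGTDS_F I" using uv(2) by (auto simp: CGTDS_F_def I)
  qed
  then show ?thesis using v by blast
qed

theorem theorem6:
  shows "\<exists>f :: inst_F \<Rightarrow> inst. computable_red f \<and>
           (\<forall>I. valid_F I \<longrightarrow> valid (f I) \<and> (CGTDS_F I \<longleftrightarrow> CGTDS (f I)))"
  using computable_red red_correct by blast

end
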